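(* Let $s\geq 2$ be an even integer, let $m\geq 3$ be an integer, and let $n$ be an integer with $n\geq (2sm-1)\left(\frac{sm}{2}-1\right)+1$. Then $$R(P_n,J_{s,m})=n+\frac{sm}{2}-1.$$
   Context: All graphs are finite and simple. For graphs $G$ and $H$, the Ramsey number $R(G,H)$ is the least natural number $N$ such that for every graph $F$ on $N$ vertices, either $F$ contains $G$ as a subgraph or the complement $\overline{F}$ contains $H$ as a subgraph. $P_n$ denotes the path on $n$ vertices. For integers $s,m\geq 2$, the generalized Jahangir graph $J_{s,m}$ is the graph on $sm+1$ vertices consisting of a cycle $C_{sm}=v_1v_2\cdots v_{sm}v_1$ together with one additional vertex adjacent to exactly the $m$ cycle vertices $v_1, v_{s+1}, v_{2s+1},\ldots,v_{(m-1)s+1}$ (i.e., $m$ vertices of the cycle at distance $s$ from each other along the cycle). *)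

theory Defs
  imports Main
begin

definition simple_graph :: "nat \<Rightarrow> (nat \<Rightarrow> nat \<Rightarrow> bool) \<Rightarrow> bool" where
  "simple_graph k E \<longleftrightarrow>
     (\<forall>u<k. \<forall>v<k. E u v \<longrightarrow> E v u) \<and> (\<forall>u<k. \<not> E u u)"

definition contains_subgraph ::
  "nat \<Rightarrow> (nat \<Rightarrow> nat \<Rightarrow> bool) \<Rightarrow> nat \<Rightarrow> (nat \<Rightarrow> nat \<Rightarrow> bool) \<Rightarrow> bool" where
  "contains_subgraph N EF k EG \<longleftrightarrow>
     (\<exists>f. inj_on f {0..<k} \<and> f ` {0..<k} \<subseteq> {0..<N} \<and>
          (\<forall>u<k. \<forall>v<k. EG u v \<longrightarrow> EF (f u) (f v)))"

definition complement_edges :: "(nat \<Rightarrow> nat \<Rightarrow> bool) \<Rightarrow> nat \<Rightarrow> nat \<Rightarrow> bool" where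
  "complement_edges E u v \<longleftrightarrow> u \<noteq> v \<and> \<not> E u v"

definition ramsey_number ::
  "nat \<Rightarrow> (nat \<Rightarrow> nat \<Rightarrow> bool) \<Rightarrow> nat \<Rightarrow> (nat \<Rightarrow> nat \<Rightarrow> bool) \<Rightarrow> nat" where
  "ramsey_number kG EG kH EH =
     (LEAST N. \<forall>E. simple_graph N E \<longrightarrow>
        contains_subgraph N E kG EG \<or> contains_subgraph N (complement_edges E) kH EH)"

definition path_edges :: "nat \<Rightarrow> nat \<Rightarrow> bool" where
  "path_edges u v \<longleftrightarrow> u + 1 = v \<or> v + 1 = u"

text \<open>Generalized Jahangir graph J_{s,m}: cycle on 0..sm-1 (vertex i corresponds to v_{i+1}),
  hub vertex sm adjacent to the cycle vertices i with s dvd i (i.e. v_1, v_{s+1}, ...).\<close>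
definition jahangir_edges :: "nat \<Rightarrow> nat \<Rightarrow> nat \<Rightarrow> nat \<Rightarrow> bool" where
  "jahangir_edges s m u v \<longleftrightarrow>
     (u < s*m \<and> v < s*m \<and> (v = (u + 1) mod (s*m) \<or> u = (v + 1) mod (s*m))) \<or>
     (u = s*m \<and> v < s*m \<and> s dvd v) \<or>
     (v = s*m \<and> u < s*m \<and> s dvd u)"

end

theory Submission
  imports Defs
begin

definition vpath :: "nat \<Rightarrow> (nat \<Rightarrow> nat \<Rightarrow> bool) \<Rightarrow> (nat \<Rightarrow> nat) \<Rightarrow> nat \<Rightarrow> bool" where
  "vpath N E p L \<longleftrightarrow> inj_on p {..<L} \<and> p ` {..<L} \<subseteq> {..<N} \<and> (\<forall>i. Suc i < L \<longrightarrow> E (p i) (p (Suc i)))"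

lemma vpath_lt: "vpath N E p L \<Longrightarrow> i < L \<Longrightarrow> p i < N"
  unfolding vpath_def by blast

lemma vpath_prefix: "vpath N E p L \<Longrightarrow> L' \<le> L \<Longrightarrow> vpath N E p L'"
  unfolding vpath_def by (auto intro: inj_on_subset) (meson image_subset_iff lessThan_iff less_le_trans)

lemma vpath_contains:
  assumes sg: "simple_graph N E" and vp: "vpath N E p L" and nl: "n \<le> L"
  shows "contains_subgraph N E n path_edges"
proof -
  have sym: "\<And>u v. u < N \<Longrightarrow> v < N \<Longrightarrow> E u v \<Longrightarrow> E v u" using sg unfolding simple_graph_def by blast
  have inj: "inj_on p {0..<n}" using vp nl unfolding vpath_def by (auto intro: inj_on_subset)
  have img: "p ` {0..<n} \<subseteq> {0..<N}" using vpath_lt[OF vp] nl by auto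
  have edges: "\<forall>u<n. \<forall>v<n. path_edges u v \<longrightarrow> E (p u) (p v)"
  proof (intro allI impI)
    fix u v assume u: "u < n" and v: "v < n" and pe: "path_edges u v"
    show "E (p u) (p v)"
    proof (cases "u + 1 = v")
      case True then show ?thesis using vp nl v unfolding vpath_def by auto
    next
      case False
      then have "v + 1 = u" using pe unfolding path_edges_def by auto
      then have "E (p v) (p u)" using vp nl u unfolding vpath_def by auto
      moreover have "p u < N" "p v < N" using vpath_lt[OF vp] nl u v by auto
      ultimately show ?thesis using sym by blast
    qed
  qed
  show ?thesis unfolding contains_subgraph_def using inj img edges by blast
qed

lemma vpath_ext:
  assumes vp: "vpath N E p L" and w: "w < N" "w \<notin> p ` {..<L}"
    and qi: "q ` {..<Suc L} \<subseteq> {..<N}"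
    and sup: "insert w (p ` {..<L}) \<subseteq> q ` {..<Suc L}"
    and ed: "\<forall>t. Suc t < Suc L \<longrightarrow> E (q t) (q (Suc t))"
  shows "vpath N E q (Suc L)"
proof -
  have ip: "inj_on p {..<L}" using vp unfolding vpath_def by auto
  have c1: "card (insert w (p ` {..<L})) = Suc L"
    using w ip by (simp add: card_image)
  have "card (insert w (p ` {..<L})) \<le> card (q ` {..<Suc L})"
    using sup by (intro card_mono) auto
  moreover have "card (q ` {..<Suc L}) \<le> Suc L"
    using card_image_le[of "{..<Suc L}" q] by simp
  ultimately have "card (q ` {..<Suc L}) = card {..<Suc L}" using c1 by simp
  then have "inj_on q {..<Suc L}" using inj_on_iff_eq_card by blast
  then show ?thesis unfolding vpath_def using qi ed by blast
qed

lemma ins_path: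
  assumes vp: "vpath N E p L" and i: "i < L" and w: "w < N" "w \<notin> p ` {..<L}"
    and e1: "E (p i) w" and e2: "Suc i < L \<longrightarrow> E w (p (Suc i))"
  shows "vpath N E (\<lambda>t. if t \<le> i then p t else if t = Suc i then w else p (t - 1)) (Suc L)"
    (is "vpath N E ?q _")
proof (rule vpath_ext[OF vp w])
  show "?q ` {..<Suc L} \<subseteq> {..<N}"
    using vpath_lt[OF vp] w i by auto
  show "insert w (p ` {..<L}) \<subseteq> ?q ` {..<Suc L}"
  proof
    fix y assume "y \<in> insert w (p ` {..<L})"
    then consider "y = w" | x where "x < L" "y = p x" by auto
    then show "y \<in> ?q ` {..<Suc L}"
    proof cases
      case 1 then show ?thesis using i by (auto intro!: image_eqI[where x="Suc i"])
    next
      case 2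
      show ?thesis
      proof (cases "x \<le> i")
        case True then show ?thesis using 2 by (auto intro!: image_eqI[where x=x])
      next
        case False then show ?thesis using 2 by (auto intro!: image_eqI[where x="Suc x"])
      qed
    qed
  qed
  show "\<forall>t. Suc t < Suc L \<longrightarrow> E (?q t) (?q (Suc t))"
  proof (intro allI impI)
    fix t assume t: "Suc t < Suc L"
    have pe: "\<And>j. Suc j < L \<Longrightarrow> E (p j) (p (Suc j))" using vp unfolding vpath_def by auto
    consider "Suc t \<le> i" | "t = i" | "t = Suc i" | "t > Suc i" by linarith
    then show "E (?q t) (?q (Suc t))"
    proof cases
      case 1 then show ?thesis using pe i by auto
    next
      case 2 then show ?thesis using e1 by auto
    next
      case 3 then show ?thesis using e2 t by auto
    next
      case 4 then have "Suc (t - 1) < L" "Suc (t-1) = t" using t by auto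
      then show ?thesis using pe[of "t - 1"] 4 by auto
    qed
  qed
qed

lemma rot_path:
  assumes vp: "vpath N E p L" and ij: "i < j" "Suc j < L" and w: "w < N" "w \<notin> p ` {..<L}"
    and sym: "\<And>u v. u < N \<Longrightarrow> v < N \<Longrightarrow> E u v \<Longrightarrow> E v u"
    and e1: "E (p i) w" and e2: "E w (p j)" and e3: "E (p (Suc i)) (p (Suc j))"
  shows "vpath N E (\<lambda>t. if t \<le> i then p t else if t = Suc i then w
           else if t \<le> Suc j then p (j + i + 2 - t) else p (t - 1)) (Suc L)"
    (is "vpath N E ?q _")
proof (rule vpath_ext[OF vp w])
  show "?q ` {..<Suc L} \<subseteq> {..<N}"
  proof
    fix y assume "y \<in> ?q ` {..<Suc L}"
    then obtain t where t: "t < Suc L" "y = ?q t" by blast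
    consider "t \<le> i" | "t = Suc i" | "Suc i < t" "t \<le> Suc j" | "Suc j < t" by linarith
    then show "y \<in> {..<N}"
    proof cases
      case 1 then show ?thesis using vpath_lt[OF vp, of t] t ij by simp
    next
      case 2 then show ?thesis using w t by simp
    next
      case 3
      have "j + i + 2 - t < L" using 3 ij by linarith
      then show ?thesis using vpath_lt[OF vp, of "j + i + 2 - t"] 3 t by simp
    next
      case 4
      have "t - 1 < L" using 4 t by linarith
      then show ?thesis using vpath_lt[OF vp, of "t - 1"] 4 t ij by simp
    qed
  qed
  show "insert w (p ` {..<L}) \<subseteq> ?q ` {..<Suc L}"
  proof
    fix y assume "y \<in> insert w (p ` {..<L})"
    then consider "y = w" | x where "x < L" "y = p x" by blast
    then show "y \<in> ?q ` {..<Suc L}"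
    proof cases
      case 1
      have "?q (Suc i) = w" by simp
      moreover have "Suc i < Suc L" using ij by auto
      ultimately show ?thesis using 1 by (intro rev_image_eqI[where x="Suc i"]) simp_all
    next
      case 2
      note xL = 2(1) and yx = 2(2)
      consider "x \<le> i" | "i < x" "x \<le> j" | "j < x" by linarith
      then show ?thesis
      proof cases
        case 1
        have e: "p x = ?q x" using 1 by simp
        have m: "x \<in> {..<Suc L}" using xL by simp
        show ?thesis unfolding yx by (rule rev_image_eqI[OF m]) (rule e)
      next
        case 2
        have a: "\<not> (j+i+2-x \<le> i)" "j+i+2-x \<noteq> Suc i" "j+i+2-x \<le> Suc j" "j + i + 2 - (j + i + 2 - x) = x" using 2 by linarith+
        have e: "p x = ?q (j + i + 2 - x)" using a by simp
        have m: "j + i + 2 - x \<in> {..<Suc L}" using 2 ij by simp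
        show ?thesis unfolding yx by (rule rev_image_eqI[OF m]) (rule e)
      next
        case 3
        have e: "p x = ?q (Suc x)" using 3 ij by simp
        have m: "Suc x \<in> {..<Suc L}" using xL by simp
        show ?thesis unfolding yx by (rule rev_image_eqI[OF m]) (rule e)
      qed
    qed
  qed
  show "\<forall>t. Suc t < Suc L \<longrightarrow> E (?q t) (?q (Suc t))"
  proof (intro allI impI)
    fix t assume t: "Suc t < Suc L"
    have pe: "\<And>j. Suc j < L \<Longrightarrow> E (p j) (p (Suc j))" using vp unfolding vpath_def by auto
    consider "Suc t \<le> i" | "t = i" | "t = Suc i" | "Suc i < t" "t \<le> j" | "t = Suc j" | "t > Suc j" by linarith
    then show "E (?q t) (?q (Suc t))"
    proof cases
      case 1 then have "Suc t < L" using ij by simp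
      then show ?thesis using pe[of t] 1 by simp
    next
      case 2 then show ?thesis using e1 by simp
    next
      case 3 then show ?thesis using e2 ij by simp
    next
      case 4
      define x where "x = j + i + 1 - t"
      have x: "Suc x < L" "j + i + 2 - t = Suc x" "j + i + 2 - Suc t = x" using 4 ij unfolding x_def by linarith+
      have "E (p x) (p (Suc x))" using pe x by blast
      moreover have "p x < N" "p (Suc x) < N" using vpath_lt[OF vp] x(1) by simp_all
      ultimately have "E (p (Suc x)) (p x)" using sym by blast
      moreover have "?q t = p (Suc x)" using 4 x by simp
      moreover have "?q (Suc t) = p x" using 4 x by simp
      ultimately show ?thesis by simp
    next
      case 5 then show ?thesis using e3 ij by simp
    next
      case 6 then have "Suc (t - 1) < L" "Suc (t-1) = t" using t by linarith+
      then show ?thesis using pe[of "t - 1"] 6 ij by simp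
    qed
  qed
qed

definition dinv :: "nat \<Rightarrow> (nat \<Rightarrow> nat \<Rightarrow> bool) \<Rightarrow> nat set \<Rightarrow> nat list \<Rightarrow> nat set \<Rightarrow> bool" where
  "dinv N E S T U \<longleftrightarrow> S \<inter> set T = {} \<and> S \<inter> U = {} \<and> set T \<inter> U = {} \<and> S \<union> set T \<union> U = {..<N}
     \<and> distinct T \<and> (\<forall>i. Suc i < length T \<longrightarrow> E (T!i) (T!Suc i)) \<and> (\<forall>x\<in>S. \<forall>y\<in>U. \<not> E x y)"

lemma dfs:
  assumes sym: "\<And>u v. u < N \<Longrightarrow> v < N \<Longrightarrow> E u v \<Longrightarrow> E v u" and a: "a \<le> N"
  shows "dinv N E S T U \<Longrightarrow> card S \<le> a \<Longrightarrow> \<exists>S' T' U'. dinv N E S' T' U' \<and> card S' = a"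
proof (induction "2 * card U + length T" arbitrary: S T U rule: less_induct)
  case less
  note inv = less.prems(1)
  have finS: "finite S" and finU: "finite U"
    using inv unfolding dinv_def by (metis finite_Un finite_lessThan)+
  show ?case
  proof (cases "card S = a")
    case True then show ?thesis using inv by blast
  next
    case False
    hence lt: "card S < a" using less.prems by simp
    have ne: "set T \<union> U \<noteq> {}"
    proof
      assume "set T \<union> U = {}"
      then have "S = {..<N}" using inv unfolding dinv_def by auto
      then show False using lt a by simp
    qed
    show ?thesis
    proof (cases T)
      case Nil
      then obtain u where u: "u \<in> U" using ne by auto
      have "dinv N E S [u] (U - {u})" using inv Nil u unfolding dinv_def by auto
      moreover have "2 * card (U - {u}) + length [u] < 2 * card U + length T"
        using Nil u finU card_Diff1_less[OF finU u] by (simp add: card_Diff_singleton)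
      ultimately show ?thesis using less.hyps less.prems(2) by blast
    next
      case (Cons t T')
      have tN: "t < N" using inv Cons unfolding dinv_def by auto
      show ?thesis
      proof (cases "\<exists>u\<in>U. E t u")
        case True
        then obtain u where u: "u \<in> U" "E t u" by blast
        have uN: "u < N" using inv u unfolding dinv_def by auto
        have path: "\<forall>i. Suc i < length (u # T) \<longrightarrow> E ((u#T)!i) ((u#T)!Suc i)"
        proof (intro allI impI)
          fix i assume i: "Suc i < length (u # T)"
          show "E ((u#T)!i) ((u#T)!Suc i)"
          proof (cases i)
            case 0 then show ?thesis using sym[OF tN uN u(2)] Cons by simp
          next
            case (Suc i') then show ?thesis using inv i unfolding dinv_def by auto
          qed
        qed
        have "dinv N E S (u # T) (U - {u})" using inv u path unfolding dinv_def by auto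
        moreover have "2 * card (U - {u}) + length (u # T) < 2 * card U + length T"
        proof -
          have "card U \<ge> 1" using u finU by (metis One_nat_def Suc_leI card_gt_0_iff empty_iff)
          then show ?thesis using u by (simp add: card_Diff_singleton)
        qed
        ultimately show ?thesis using less.hyps less.prems(2) by blast
      next
        case False
        have tS: "t \<notin> S" using inv Cons unfolding dinv_def by auto
        have path: "\<forall>i. Suc i < length T' \<longrightarrow> E (T'!i) (T'!Suc i)"
          using inv Cons unfolding dinv_def by (metis Suc_less_eq length_Cons nth_Cons_Suc)
        have "dinv N E (insert t S) T' U" using inv Cons False path unfolding dinv_def by auto
        moreover have "2 * card U + length T' < 2 * card U + length T" using Cons by simp
        moreover have "card (insert t S) \<le> a" using tS finS lt by simp
        ultimately show ?thesis using less.hyps by blast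
      qed
    qed
  qed
qed

lemma dfs_sets:
  assumes sym: "\<And>u v. u < N \<Longrightarrow> v < N \<Longrightarrow> E u v \<Longrightarrow> E v u" and a: "a \<le> N"
    and nop: "\<forall>p. \<not> vpath N E p n'"
  shows "\<exists>S U. S \<subseteq> {..<N} \<and> U \<subseteq> {..<N} \<and> S \<inter> U = {} \<and> card S = a \<and> N < a + card U + n'
           \<and> (\<forall>x\<in>S. \<forall>y\<in>U. \<not> E x y)"
proof -
  have i0: "dinv N E {} [] {..<N}" unfolding dinv_def by simp
  have "\<exists>S' T' U'. dinv N E S' T' U' \<and> card S' = a" using dfs[OF sym a i0] by simp
  then obtain S T U where inv: "dinv N E S T U" and cS: "card S = a" by blast
  have dT: "distinct T" and sT: "set T \<subseteq> {..<N}" and eT: "\<forall>i. Suc i < length T \<longrightarrow> E (T!i) (T!Suc i)"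
    using inv unfolding dinv_def by blast+
  have "inj_on (\<lambda>i. T!i) {..<length T}" using inj_on_nth[OF dT, of "{..<length T}"] by simp
  moreover have "(\<lambda>i. T!i) ` {..<length T} \<subseteq> {..<N}" using sT by (auto simp: set_conv_nth)
  ultimately have vp: "vpath N E (\<lambda>i. T!i) (length T)"
    unfolding vpath_def using eT by blast
  have "length T < n'"
  proof (rule ccontr)
    assume "\<not> length T < n'"
    then have "vpath N E (\<lambda>i. T!i) n'" using vpath_prefix[OF vp] by simp
    then show False using nop by blast
  qed
  have fin: "finite S" "finite U" using inv unfolding dinv_def by (metis finite_Un finite_lessThan)+
  have "N = card (S \<union> set T \<union> U)" using inv unfolding dinv_def by simp
  also have "\<dots> = card (S \<union> set T) + card U"
  proof (rule card_Un_disjoint)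
    show "(S \<union> set T) \<inter> U = {}" using inv unfolding dinv_def by blast
  qed (use fin in auto)
  also have "card (S \<union> set T) = card S + card (set T)"
    by (rule card_Un_disjoint) (use fin inv in \<open>auto simp: dinv_def\<close>)
  also have "card (set T) = length T" using inv unfolding dinv_def by (simp add: distinct_card)
  finally have "N = a + length T + card U" using cS by simp
  moreover have "S \<subseteq> {..<N}" "U \<subseteq> {..<N}" "S \<inter> U = {}" "\<forall>x\<in>S. \<forall>y\<in>U. \<not> E x y"
    using inv unfolding dinv_def by blast+
  moreover have "N < a + card U + n'" using calculation(1) \<open>length T < n'\<close> by linarith
  ultimately show ?thesis using cS by blast
qed

lemma J_embed:
  assumes sk: "s*m = 2*k" and es: "even s" and AN: "A \<subseteq> {..<N}" and BN: "B \<subseteq> {..<N}"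
    and AB: "A \<inter> B = {}" and cA: "k \<le> card A" and cB: "Suc k \<le> card B"
    and ne: "\<forall>a\<in>A. \<forall>b\<in>B. \<not> E a b \<and> \<not> E b a"
  shows "contains_subgraph N (complement_edges E) (s*m+1) (jahangir_edges s m)"
proof -
  have finA: "finite A" using AN finite_subset by blast
  have finB: "finite B" using BN finite_subset by blast
  obtain \<alpha> where al: "bij_betw \<alpha> {0..<card A} A" using ex_bij_betw_nat_finite[OF finA] by blast
  obtain \<beta> where be: "bij_betw \<beta> {0..<card B} B" using ex_bij_betw_nat_finite[OF finB] by blast
  have alI: "inj_on \<alpha> {..<k}" using al cA unfolding bij_betw_def by (auto intro: inj_on_subset)
  have alA: "\<And>i. i < k \<Longrightarrow> \<alpha> i \<in> A" using al cA unfolding bij_betw_def by auto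
  have beI: "inj_on \<beta> {..<Suc k}" using be cB unfolding bij_betw_def by (auto intro: inj_on_subset)
  have beB: "\<And>i. i < Suc k \<Longrightarrow> \<beta> i \<in> B" using be cB unfolding bij_betw_def by auto
  define idx where "idx v = (if v = 2*k then k else v div 2)" for v :: nat
  define g where "g v = (if v < 2*k \<and> even v then \<alpha> (v div 2) else \<beta> (idx v))" for v
  define cls where "cls v = (v < 2*k \<and> even v)" for v :: nat
  have idxlt: "\<And>v. v \<le> 2*k \<Longrightarrow> idx v < Suc k" unfolding idx_def by auto
  have gA: "\<And>v. cls v \<Longrightarrow> g v \<in> A" unfolding g_def cls_def using alA by auto
  have gB: "\<And>v. v \<le> 2*k \<Longrightarrow> \<not> cls v \<Longrightarrow> g v \<in> B" unfolding g_def cls_def using beB idxlt by auto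
  have inj: "inj_on g {0..<s*m+1}"
  proof (rule inj_onI)
    fix u v assume u: "u \<in> {0..<s*m+1}" and v: "v \<in> {0..<s*m+1}" and e: "g u = g v"
    have u': "u \<le> 2*k" and v': "v \<le> 2*k" using u v sk by auto
    consider "cls u" "cls v" | "\<not> cls u" "\<not> cls v" | "cls u \<noteq> cls v" by blast
    then show "u = v"
    proof cases
      case 1
      then have "\<alpha> (u div 2) = \<alpha> (v div 2)" using e unfolding g_def cls_def by simp
      moreover have "u div 2 < k" "v div 2 < k" using 1 unfolding cls_def by auto
      ultimately have "u div 2 = v div 2" using alI by (auto dest: inj_onD)
      then show ?thesis using 1 unfolding cls_def by (metis dvd_mult_div_cancel)
    next
      case 2
      then have "g u = \<beta> (idx u)" "g v = \<beta> (idx v)" unfolding g_def cls_def by auto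
      then have "\<beta> (idx u) = \<beta> (idx v)" using e by simp
      then have i: "idx u = idx v" using beI idxlt u' v' by (auto dest: inj_onD)
      show ?thesis
      proof (cases "u = 2*k \<or> v = 2*k")
        case True
        have lt: "\<And>w. w \<le> 2*k \<Longrightarrow> \<not> cls w \<Longrightarrow> w \<noteq> 2*k \<Longrightarrow> idx w < k"
          unfolding idx_def cls_def by auto
        have "idx (2*k) = k" unfolding idx_def by simp
        then show ?thesis using True i 2 u' v' lt by (metis less_irrefl)
      next
        case False
        then have "odd u" "odd v" "u div 2 = v div 2" using i 2 u' v' unfolding idx_def cls_def by auto
        then show ?thesis by (metis odd_two_times_div_two_succ)
      qed
    next
      case 3
      then have "g u \<in> A \<and> g v \<in> B \<or> g u \<in> B \<and> g v \<in> A" using gA gB u' v' by blast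
      then show ?thesis using e AB by auto
    qed
  qed
  have img: "g ` {0..<s*m+1} \<subseteq> {0..<N}"
  proof
    fix y assume "y \<in> g ` {0..<s*m+1}"
    then obtain v where v: "v < s*m+1" "y = g v" by auto
    then have "v \<le> 2*k" using sk by simp
    show "y \<in> {0..<N}"
    proof (cases "cls v")
      case True then show ?thesis using gA AN v by auto
    next
      case False then show ?thesis using gB \<open>v \<le> 2*k\<close> BN v by auto
    qed
  qed
  have edges: "\<forall>u<s*m+1. \<forall>v<s*m+1. jahangir_edges s m u v \<longrightarrow> complement_edges E (g u) (g v)"
  proof (intro allI impI)
    fix u v assume u: "u < s*m+1" and v: "v < s*m+1" and j: "jahangir_edges s m u v"
    have u': "u \<le> 2*k" and v': "v \<le> 2*k" using u v sk by auto
    have kpos: "0 < k" using j sk unfolding jahangir_edges_def by auto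
    have succ: "\<And>x y. x < 2*k \<Longrightarrow> y = Suc x mod (2*k) \<Longrightarrow> cls x \<noteq> cls y"
    proof -
      fix x y assume x: "x < 2*k" and y: "y = Suc x mod (2*k)"
      show "cls x \<noteq> cls y"
      proof (cases "Suc x < 2*k")
        case True then have "y = Suc x" using y by simp
        then show ?thesis using True x unfolding cls_def by auto
      next
        case False then have "Suc x = 2*k" using x by simp
        then have "y = 0" "odd x" using y by (simp, presburger)
        then show ?thesis using kpos unfolding cls_def by auto
      qed
    qed
    have j': "(u < 2*k \<and> v < 2*k \<and> (v = Suc u mod (2*k) \<or> u = Suc v mod (2*k))) \<or>
        (u = 2*k \<and> v < 2*k \<and> s dvd v) \<or> (v = 2*k \<and> u < 2*k \<and> s dvd u)"
      using j unfolding jahangir_edges_def sk by simp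
    have ev: "\<And>x. s dvd x \<Longrightarrow> even x" using es by (auto dest: dvd_trans)
    have "cls u \<noteq> cls v"
    proof -
      consider "u < 2*k" "v = Suc u mod (2*k)" | "v < 2*k" "u = Suc v mod (2*k)"
        | "u = 2*k" "v < 2*k" "s dvd v" | "v = 2*k" "u < 2*k" "s dvd u" using j' by blast
      then show ?thesis
      proof cases
        case 1 then show ?thesis using succ by blast
      next
        case 2 then show ?thesis using succ by metis
      next
        case 3 then show ?thesis using ev[of v] unfolding cls_def by auto
      next
        case 4 then show ?thesis using ev[of u] unfolding cls_def by auto
      qed
    qed
    then have "g u \<in> A \<and> g v \<in> B \<or> g u \<in> B \<and> g v \<in> A" using gA gB u' v' by blast
    then show "complement_edges E (g u) (g v)" using AB ne unfolding complement_edges_def by auto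
  qed
  show ?thesis unfolding contains_subgraph_def using inj img edges by blast
qed

lemma lower:
  assumes N: "N < n + k - 1" and kn: "k < n" and sk: "s*m = 2*k" and k0: "0 < k"
  shows "\<exists>E. simple_graph N E \<and> \<not> contains_subgraph N E n path_edges
           \<and> \<not> contains_subgraph N (complement_edges E) (s*m+1) (jahangir_edges s m)"
proof -
  define E where "E u v = (u \<noteq> v \<and> (u < n - 1 \<longleftrightarrow> v < n - 1))" for u v :: nat
  have sg: "simple_graph N E" unfolding simple_graph_def E_def by auto
  have "card {n-1..<N} = N - (n-1)" by simp
  then have c2: "card {n-1..<N} < k" using N kn k0 by linarith
  have np: "\<not> contains_subgraph N E n path_edges"
  proof
    assume "contains_subgraph N E n path_edges"
    then obtain f where fi: "inj_on f {0..<n}" and fim: "f ` {0..<n} \<subseteq> {0..<N}"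
      and fe: "\<forall>u<n. \<forall>v<n. path_edges u v \<longrightarrow> E (f u) (f v)"
      unfolding contains_subgraph_def by blast
    have adj: "\<And>u. Suc u < n \<Longrightarrow> (f u < n - 1) = (f (Suc u) < n - 1)"
      using fe unfolding path_edges_def E_def by auto
    have same: "\<And>i. i < n \<Longrightarrow> (f i < n - 1) = (f 0 < n - 1)"
    proof -
      fix i show "i < n \<Longrightarrow> (f i < n - 1) = (f 0 < n - 1)"
        by (induction i) (use adj in auto)
    qed
    show False
    proof (cases "f 0 < n - 1")
      case True
      then have "f ` {0..<n} \<subseteq> {0..<n-1}" using same by auto
      then have "card {0..<n} \<le> card {0..<n-1}" using card_inj_on_le[OF fi] by blast
      then show False using kn by simp
    next
      case False
      have "f ` {0..<n} \<subseteq> {n-1..<N}"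
      proof
        fix y assume "y \<in> f ` {0..<n}"
        then obtain i where i: "i < n" "y = f i" by auto
        then have "f i < N" using fim by (meson atLeastLessThan_iff image_subset_iff zero_le)
        moreover have "\<not> f i < n - 1" using same[OF i(1)] False by simp
        ultimately show "y \<in> {n-1..<N}" using i by simp
      qed
      then have "card {0..<n} \<le> card {n-1..<N}" using card_inj_on_le[OF fi] by blast
      then show False using c2 kn by simp
    qed
  qed
  have nj: "\<not> contains_subgraph N (complement_edges E) (s*m+1) (jahangir_edges s m)"
  proof
    assume "contains_subgraph N (complement_edges E) (s*m+1) (jahangir_edges s m)"
    then obtain g where gi: "inj_on g {0..<s*m+1}" and gim: "g ` {0..<s*m+1} \<subseteq> {0..<N}"
      and ge: "\<forall>u<s*m+1. \<forall>v<s*m+1. jahangir_edges s m u v \<longrightarrow> complement_edges E (g u) (g v)"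
      unfolding contains_subgraph_def by blast
    have adj: "\<And>u. Suc u < 2*k \<Longrightarrow> (g u < n - 1) \<noteq> (g (Suc u) < n - 1)"
    proof -
      fix u assume u: "Suc u < 2*k"
      have "jahangir_edges s m u (Suc u)" unfolding jahangir_edges_def sk using u by simp
      then have "complement_edges E (g u) (g (Suc u))" using ge u sk by simp
      then show "(g u < n - 1) \<noteq> (g (Suc u) < n - 1)" unfolding complement_edges_def E_def by auto
    qed
    have alt: "\<And>i. i < 2*k \<Longrightarrow> (g i < n - 1) = ((g 0 < n - 1) = even i)"
    proof -
      fix i show "i < 2*k \<Longrightarrow> (g i < n - 1) = ((g 0 < n - 1) = even i)"
        by (induction i) (use adj in auto)
    qed
    obtain h where hdef: "h = (if g 0 < n - 1 then (\<lambda>i::nat. 2*i+1) else (\<lambda>i. 2*i))" by blast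
    have hinj: "inj_on h {..<k}" unfolding hdef by (auto intro: inj_onI)
    have hsub: "h ` {..<k} \<subseteq> {0..<s*m+1}" unfolding hdef sk by auto
    have hlt: "\<And>i. i < k \<Longrightarrow> h i < 2*k" unfolding hdef by auto
    have hpar: "\<And>i. even (h i) = (\<not> g 0 < n - 1)" unfolding hdef by auto
    have "inj_on (g \<circ> h) {..<k}"
      using hinj inj_on_subset[OF gi hsub] by (rule comp_inj_on)
    moreover have "(g \<circ> h) ` {..<k} \<subseteq> {n-1..<N}"
    proof
      fix y assume "y \<in> (g \<circ> h) ` {..<k}"
      then obtain i where i: "i < k" "y = g (h i)" by auto
      have "h i \<in> {0..<s*m+1}" using hsub i by auto
      then have "g (h i) < N" using gim by (meson atLeastLessThan_iff image_subset_iff)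
      moreover have "\<not> g (h i) < n - 1" using alt[OF hlt[OF i(1)]] hpar[of i] by auto
      ultimately show "y \<in> {n-1..<N}" using i by auto
    qed
    ultimately have "card {..<k} \<le> card {n-1..<N}" using card_inj_on_le by blast
    then show False using c2 by simp
  qed
  show ?thesis using sg np nj by blast
qed

lemma long_case:
  assumes sym: "\<And>u v. u < N \<Longrightarrow> v < N \<Longrightarrow> E u v \<Longrightarrow> E v u"
    and noPn: "\<And>q L. vpath N E q L \<Longrightarrow> L < n"
    and hasp: "vpath N E p0 n'"
    and Nn: "N = n + k - 1" and n'def: "n' = n - k - 1" and big: "2*k*k + k + 2 \<le> n" and k1: "1 \<le> k"
  shows "\<exists>A B. A \<subseteq> {..<N} \<and> B \<subseteq> {..<N} \<and> A \<inter> B = {} \<and> k \<le> card A \<and> Suc k \<le> card B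
           \<and> (\<forall>a\<in>A. \<forall>b\<in>B. \<not> E a b \<and> \<not> E b a)"
proof -
  define Ls where "Ls = {L. \<exists>q. vpath N E q L}"
  have Lsb: "Ls \<subseteq> {..<n}" unfolding Ls_def using noPn by blast
  then have finLs: "finite Ls" using finite_subset by blast
  have n'Ls: "n' \<in> Ls" unfolding Ls_def using hasp by blast
  define L where "L = Max Ls"
  have "L \<in> Ls" unfolding L_def using finLs n'Ls Max_in by blast
  then obtain p where vp: "vpath N E p L" unfolding Ls_def by blast
  have maxim: "\<And>q L'. vpath N E q L' \<Longrightarrow> L' \<le> L"
    unfolding L_def using finLs Ls_def Max_ge by blast
  have n'L: "n' \<le> L" using maxim hasp by blast
  have Ln: "L < n" using noPn vp by blast
  have pinj: "inj_on p {..<L}" and psub: "p ` {..<L} \<subseteq> {..<N}" using vp unfolding vpath_def by blast+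
  define P where "P = p ` {..<L}"
  define W where "W = {..<N} - P"
  have cP: "card P = L" unfolding P_def using pinj by (simp add: card_image)
  have cW: "card W = N - L" unfolding W_def using psub cP P_def by (simp add: card_Diff_subset)
  have cWk: "k \<le> card W" using cW Nn Ln by linarith
  have finW: "finite W" unfolding W_def by simp
  define D where "D w = {i. i < L \<and> E w (p i)}" for w
  have insF: "\<And>w i. w \<in> W \<Longrightarrow> i < L \<Longrightarrow> E w (p i) \<Longrightarrow> Suc i < L \<and> \<not> E w (p (Suc i))"
  proof (rule ccontr)
    fix w i assume w: "w \<in> W" and i: "i < L" and e: "E w (p i)" and c: "\<not> (Suc i < L \<and> \<not> E w (p (Suc i)))"
    have wN: "w < N" and wP: "w \<notin> p ` {..<L}" using w unfolding W_def P_def by auto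
    have e1: "E (p i) w" using sym[OF wN vpath_lt[OF vp i] e] .
    have e2: "Suc i < L \<longrightarrow> E w (p (Suc i))" using c by blast
    from ins_path[OF vp i wN wP e1 e2] have "Suc L \<le> L" using maxim by blast
    then show False by simp
  qed
  have rotF: "\<And>w i j. w \<in> W \<Longrightarrow> i < j \<Longrightarrow> j < L \<Longrightarrow> E w (p i) \<Longrightarrow> E w (p j) \<Longrightarrow>
      \<not> E (p (Suc i)) (p (Suc j))"
  proof
    fix w i j assume w: "w \<in> W" and ij: "i < j" "j < L" and ei: "E w (p i)" and ej: "E w (p j)"
      and e3: "E (p (Suc i)) (p (Suc j))"
    have wN: "w < N" and wP: "w \<notin> p ` {..<L}" using w unfolding W_def P_def by auto
    have sj: "Suc j < L" using insF[OF w ij(2) ej] by blast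
    have e1: "E (p i) w" using sym[OF wN vpath_lt[OF vp] ei] ij by simp
    from rot_path[OF vp ij(1) sj wN wP sym e1 ej e3] have "Suc L \<le> L" using maxim by blast
    then show False by simp
  qed
  show ?thesis
  proof (cases "\<exists>w\<in>W. 2*k \<le> card (D w)")
    case True
    then obtain w where w: "w \<in> W" and dw: "2*k \<le> card (D w)" by blast
    have wN: "w < N" and wP: "w \<notin> P" using w unfolding W_def by auto
    define Nw where "Nw = (\<lambda>i. p (Suc i)) ` D w"
    have DL: "\<And>i. i \<in> D w \<Longrightarrow> Suc i < L" using insF[OF w] unfolding D_def by blast
    have injS: "inj_on (\<lambda>i. p (Suc i)) (D w)"
    proof (rule inj_onI)
      fix x y assume x: "x \<in> D w" and y: "y \<in> D w" and e: "p (Suc x) = p (Suc y)"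
      have "Suc x \<in> {..<L}" "Suc y \<in> {..<L}" using DL x y by auto
      then have "Suc x = Suc y" using pinj e by (auto dest: inj_onD)
      then show "x = y" by simp
    qed
    have cNw: "card Nw = card (D w)" unfolding Nw_def using injS by (simp add: card_image)
    have NwP: "Nw \<subseteq> P" unfolding Nw_def P_def using DL by auto
    define I where "I = insert w Nw"
    have finNw: "finite Nw" unfolding Nw_def D_def by simp
    have cI: "Suc (2*k) \<le> card I" unfolding I_def using cNw dw wP NwP finNw by (auto simp: card_insert_if)
    have IN: "I \<subseteq> {..<N}" unfolding I_def using wN NwP psub P_def by auto
    have ind: "\<And>x y. x \<in> I \<Longrightarrow> y \<in> I \<Longrightarrow> x \<noteq> y \<Longrightarrow> \<not> E x y"
    proof -
      have wn: "\<And>i. i \<in> D w \<Longrightarrow> \<not> E w (p (Suc i))" using insF[OF w] unfolding D_def by blast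
      have nn: "\<And>i j. i \<in> D w \<Longrightarrow> j \<in> D w \<Longrightarrow> i < j \<Longrightarrow> \<not> E (p (Suc i)) (p (Suc j))"
        using rotF[OF w] unfolding D_def by blast
      have pN: "\<And>i. i \<in> D w \<Longrightarrow> p (Suc i) < N" using DL vpath_lt[OF vp] by blast
      fix x y assume x: "x \<in> I" and y: "y \<in> I" and xy: "x \<noteq> y"
      consider "x = w" "y \<noteq> w" | "y = w" "x \<noteq> w" | "x \<in> Nw" "y \<in> Nw" using x y xy unfolding I_def by blast
      then show "\<not> E x y"
      proof cases
        case 1
        then obtain i where "i \<in> D w" "y = p (Suc i)" using y unfolding I_def Nw_def by auto
        then show ?thesis using wn 1 by blast
      next
        case 2
        then obtain i where i: "i \<in> D w" "x = p (Suc i)" using x unfolding I_def Nw_def by auto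
        show ?thesis
        proof
          assume "E x y"
          then have "E w (p (Suc i))" using sym[OF pN[OF i(1)] wN] i 2 by blast
          then show False using wn i by blast
        qed
      next
        case 3
        then obtain i j where i: "i \<in> D w" "x = p (Suc i)" and j: "j \<in> D w" "y = p (Suc j)"
          unfolding Nw_def by auto
        have "i \<noteq> j" using xy i j by auto
        then consider "i < j" | "j < i" by linarith
        then show ?thesis
        proof cases
          case 1 then show ?thesis using nn i j by blast
        next
          case 2
          show ?thesis
          proof
            assume "E x y"
            then have "E y x" using sym pN i j by blast
            then show False using nn[OF j(1) i(1) 2] i j by blast
          qed
        qed
      qed
    qed
    have finI: "finite I" using IN finite_subset by blast
    have kI: "k \<le> card I" using cI by linarith
    obtain A where A: "A \<subseteq> I" "card A = k" using obtain_subset_with_card_n[OF kI] by metis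
    define B where "B = I - A"
    have cB: "card B = card I - k" unfolding B_def using A finI by (simp add: card_Diff_subset finite_subset)
    show ?thesis
    proof (rule exI[of _ A], rule exI[of _ B], intro conjI)
      show "A \<subseteq> {..<N}" using A IN by blast
      show "B \<subseteq> {..<N}" unfolding B_def using IN by blast
      show "A \<inter> B = {}" unfolding B_def by blast
      show "k \<le> card A" using A by simp
      show "Suc k \<le> card B" using cB cI by simp
      show "\<forall>a\<in>A. \<forall>b\<in>B. \<not> E a b \<and> \<not> E b a"
        using ind A unfolding B_def by blast
    qed
  next
    case False
    have dsm: "\<And>w. w \<in> W \<Longrightarrow> card (D w) \<le> 2*k - 1"
    proof -
      fix w assume "w \<in> W"
      then have "\<not> 2*k \<le> card (D w)" using False by blast
      then show "card (D w) \<le> 2*k - 1" by linarith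
    qed
    obtain A where A: "A \<subseteq> W" "card A = k" using obtain_subset_with_card_n[OF cWk] by metis
    have finA: "finite A" using A finW finite_subset by blast
    define Bad where "Bad = (\<Union>a\<in>A. D a)"
    have "card Bad \<le> (\<Sum>a\<in>A. card (D a))" unfolding Bad_def using card_UN_le[OF finA] by blast
    also have "\<dots> \<le> card A * (2*k - 1)"
      using sum_bounded_above[of A "\<lambda>a. card (D a)" "2*k-1"] dsm A by auto
    finally have cBad: "card Bad \<le> k * (2*k - 1)" using A by simp
    have BadL: "Bad \<subseteq> {..<L}" unfolding Bad_def D_def by auto
    define G where "G = {..<L} - Bad"
    have cG: "card G = L - card Bad" unfolding G_def using BadL by (simp add: card_Diff_subset finite_subset)
    have ar: "k * (2*k - 1) + k = 2*k*k" using k1 by (cases k) (simp_all add: algebra_simps)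
    have cGk: "Suc k \<le> card G"
    proof -
      obtain K where K: "K = k * (2*k - 1)" by blast
      obtain KK where KK: "KK = 2*k*k" by blast
      have "K + k = KK" using ar K KK by simp
      moreover have "card Bad \<le> K" using cBad K by simp
      moreover have "KK + k + 2 \<le> n" using big KK by simp
      ultimately show ?thesis using cG n'L n'def by linarith
    qed
    define B where "B = p ` G"
    have "G \<subseteq> {..<L}" unfolding G_def by (rule Diff_subset)
    then have "inj_on p G" by (rule inj_on_subset[OF pinj])
    then have cB: "card B = card G" unfolding B_def by (rule card_image)
    have BP: "B \<subseteq> P" unfolding B_def P_def G_def by (rule image_mono) blast
    show ?thesis
    proof (rule exI[of _ A], rule exI[of _ B], intro conjI)
      show "A \<subseteq> {..<N}" using A unfolding W_def by blast
      show "B \<subseteq> {..<N}" using BP psub P_def by blast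
      show "A \<inter> B = {}" using A BP unfolding W_def by blast
      show "k \<le> card A" using A by simp
      show "Suc k \<le> card B" using cB cGk by simp
      show "\<forall>a\<in>A. \<forall>b\<in>B. \<not> E a b \<and> \<not> E b a"
      proof (intro ballI)
        fix a b assume a: "a \<in> A" and b: "b \<in> B"
        then obtain i where i: "i \<in> G" "b = p i" unfolding B_def by blast
        have iL: "i < L" and iB: "i \<notin> Bad" using i(1) unfolding G_def by simp_all
        have "i \<notin> D a" using iB a unfolding Bad_def by blast
        then have "\<not> E a (p i)" using iL unfolding D_def by simp
        then have ne: "\<not> E a b" using i(2) by simp
        have aN: "a < N" using a A unfolding W_def by blast
        have bN: "b < N" using i(2) vpath_lt[OF vp iL] by simp
        show "\<not> E a b \<and> \<not> E b a" using ne sym[OF bN aN] by blast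
      qed
    qed
  qed
qed

theorem theorem1:
  fixes s m n :: nat
  assumes "s \<ge> 2" and "even s" and "m \<ge> 3"
    and "n \<ge> (2*s*m - 1) * (s*m div 2 - 1) + 1"
  shows "ramsey_number n path_edges (s*m + 1) (jahangir_edges s m) = n + s*m div 2 - 1"
proof -
  define k where "k = s*m div 2"
  have sk: "s*m = 2*k" unfolding k_def using assms(2) by auto
  have "s*m \<ge> 2*3" using assms(1,3) mult_le_mono by blast
  then have k3: "k \<ge> 3" using sk by simp
  then obtain j where j: "k = j + 3" using le_Suc_ex by (metis add.commute)
  have nb: "(2*s*m - 1) * (s*m div 2 - 1) + 1 \<le> n" using assms(4) by simp
  have "2*s*m - 1 = 4*j + 11" using sk j by simp
  moreover have "s*m div 2 - 1 = j + 2" using k_def j by simp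
  ultimately have nb2: "(4*j + 11) * (j + 2) + 1 \<le> n" using nb by simp
  have e1: "(4*j + 11) * (j + 2) + 1 = 4*(j*j) + 19*j + 23" by (simp add: algebra_simps)
  have e2: "2*k*k + k + 2 = 2*(j*j) + 13*j + 23" using j by (simp add: algebra_simps)
  have big: "2*k*k + k + 2 \<le> n" using nb2 e1 e2 by linarith
  have kn: "k < n" using big j by linarith
  define N0 where "N0 = n + k - 1"
  have N0e: "n + s*m div 2 - 1 = N0" unfolding N0_def k_def ..
  define n' where "n' = n - k - 1"
  have propN0: "\<forall>E. simple_graph N0 E \<longrightarrow>
        contains_subgraph N0 E n path_edges \<or> contains_subgraph N0 (complement_edges E) (s*m+1) (jahangir_edges s m)"
  proof (intro allI impI)
    fix E assume sg: "simple_graph N0 E"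
    have sym: "\<And>u v. u < N0 \<Longrightarrow> v < N0 \<Longrightarrow> E u v \<Longrightarrow> E v u" using sg unfolding simple_graph_def by blast
    show "contains_subgraph N0 E n path_edges \<or> contains_subgraph N0 (complement_edges E) (s*m+1) (jahangir_edges s m)"
    proof (cases "contains_subgraph N0 E n path_edges")
      case True then show ?thesis by blast
    next
      case False
      have noPn: "\<And>q L. vpath N0 E q L \<Longrightarrow> L < n"
      proof (rule ccontr)
        fix q L assume "vpath N0 E q L" "\<not> L < n"
        then have "contains_subgraph N0 E n path_edges" using vpath_contains[OF sg] by simp
        then show False using False by blast
      qed
      have "\<exists>A B. A \<subseteq> {..<N0} \<and> B \<subseteq> {..<N0} \<and> A \<inter> B = {} \<and> k \<le> card A \<and> Suc k \<le> card B
           \<and> (\<forall>a\<in>A. \<forall>b\<in>B. \<not> E a b \<and> \<not> E b a)"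
      proof (cases "\<exists>p0. vpath N0 E p0 n'")
        case True
        then obtain p0 where "vpath N0 E p0 n'" by blast
        from long_case[OF sym noPn this N0_def n'_def big] k3 show ?thesis by simp
      next
        case False
        have a: "k \<le> N0" unfolding N0_def using kn by simp
        have nop: "\<forall>p. \<not> vpath N0 E p n'" using False by blast
        from dfs_sets[OF sym a nop] obtain S U where
          SU: "S \<subseteq> {..<N0}" "U \<subseteq> {..<N0}" "S \<inter> U = {}" "card S = k" "N0 < k + card U + n'"
            "\<forall>x\<in>S. \<forall>y\<in>U. \<not> E x y" by blast
        have cU: "Suc k \<le> card U" using SU(5) unfolding N0_def n'_def using kn by linarith
        have "\<forall>a\<in>S. \<forall>b\<in>U. \<not> E a b \<and> \<not> E b a"
        proof (intro ballI)
          fix a b assume a: "a \<in> S" and b: "b \<in> U"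
          have "a < N0" "b < N0" using a b SU by auto
          then show "\<not> E a b \<and> \<not> E b a" using SU(6) a b sym by blast
        qed
        then show ?thesis using SU cU by blast
      qed
      then obtain A B where AB: "A \<subseteq> {..<N0}" "B \<subseteq> {..<N0}" "A \<inter> B = {}" "k \<le> card A" "Suc k \<le> card B"
           "\<forall>a\<in>A. \<forall>b\<in>B. \<not> E a b \<and> \<not> E b a" by blast
      have "contains_subgraph N0 (complement_edges E) (s*m+1) (jahangir_edges s m)"
        using J_embed[OF sk assms(2) AB] .
      then show ?thesis by blast
    qed
  qed
  have minimal: "\<And>N. (\<forall>E. simple_graph N E \<longrightarrow>
        contains_subgraph N E n path_edges \<or> contains_subgraph N (complement_edges E) (s*m+1) (jahangir_edges s m))
        \<Longrightarrow> N0 \<le> N"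
  proof (rule ccontr)
    fix N assume P: "\<forall>E. simple_graph N E \<longrightarrow>
        contains_subgraph N E n path_edges \<or> contains_subgraph N (complement_edges E) (s*m+1) (jahangir_edges s m)"
      and "\<not> N0 \<le> N"
    then have "N < n + k - 1" unfolding N0_def by simp
    from lower[OF this kn sk] k3 obtain E where "simple_graph N E" "\<not> contains_subgraph N E n path_edges"
      "\<not> contains_subgraph N (complement_edges E) (s*m+1) (jahangir_edges s m)" by auto
    then show False using P by blast
  qed
  show ?thesis unfolding ramsey_number_def N0e
    by (rule Least_equality) (use propN0 minimal in auto)
qed

end
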